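(* Let $A,B\in\mathrm{M}_n(\mathbb{C})$ and let $p(x)=\sum_{k=0}^d a_kx^k\in\mathbb{C}[x]$ be a nonconstant polynomial of degree $d\geq 1$. Write $[A,B]=AB-BA$ and $p[A,B]=p(AB)-p(BA)$. Then (i) $\displaystyle \|p[A,B]\|_F\le \|[A,B]\|_F\sum_{k=1}^d |a_k|\,k\,\|A\|_F^{k-1}\|B\|_F^{k-1}$; (ii) $\displaystyle h(p[A,B])\le h([A,B])\sum_{k=1}^d |a_k|\,k\,2^{2k-1}\,h(A)^{k-1}h(B)^{k-1}$.
   Context: $\|X\|_F=\sqrt{\mathrm{trace}(X^*X)}$ is the Frobenius norm and $h(X)=\max\{|v^*Xv| : v\in\mathbb{C}^n,\ \|v\|=1\}$ is the numerical radius of $X\in\mathrm{M}_n(\mathbb{C})$. *)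

theory Defs
  imports "Jordan_Normal_Form.Schur_Decomposition" "HOL-Computational_Algebra.Polynomial"
begin

definition mat_trace :: "complex mat \<Rightarrow> complex" where
  "mat_trace X = (\<Sum>i<dim_row X. X $$ (i, i))"

(* Frobenius norm: sqrt(trace(X^* X)); the trace is a nonnegative real, we take its real part *)
definition frob_norm :: "complex mat \<Rightarrow> real" where
  "frob_norm X = sqrt (Re (mat_trace (mat_adjoint X * X)))"

definition cvec_norm :: "complex vec \<Rightarrow> real" where
  "cvec_norm v = sqrt (Re (v \<bullet>c v))"

definition num_radius :: "complex mat \<Rightarrow> real" where
  "num_radius X = Sup {cmod (conjugate v \<bullet> (X *\<^sub>v v)) | v.
                       v \<in> carrier_vec (dim_col X) \<and> cvec_norm v = 1}"

definition poly_mat :: "complex poly \<Rightarrow> complex mat \<Rightarrow> complex mat" where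
  "poly_mat p X = mat (dim_row X) (dim_col X)
     (\<lambda>(i, j). \<Sum>k\<le>degree p. coeff p k * (X ^\<^sub>m k) $$ (i, j))"

definition commutator :: "complex mat \<Rightarrow> complex mat \<Rightarrow> complex mat" where
  "commutator A B = A * B - B * A"

definition poly_commutator :: "complex poly \<Rightarrow> complex mat \<Rightarrow> complex mat \<Rightarrow> complex mat" where
  "poly_commutator p A B = poly_mat p (A * B) - poly_mat p (B * A)"

end

theory Submission
  imports Defs "HOL-Analysis.L2_Norm"
begin


definition msum :: "nat \<Rightarrow> nat set \<Rightarrow> (nat \<Rightarrow> complex mat) \<Rightarrow> complex mat" where
  "msum n F f = mat n n (\<lambda>(i,j). \<Sum>k\<in>F. f k $$ (i,j))"

lemma msum_carrier[simp]: "msum n F f \<in> carrier_mat n n"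
  unfolding msum_def by simp

lemma msum_dim[simp]: "dim_row (msum n F f) = n" "dim_col (msum n F f) = n"
  unfolding msum_def by simp_all

lemma msum_empty: "msum n {} f = 0\<^sub>m n n"
  unfolding msum_def by (rule eq_matI) auto

lemma msum_insert: "finite F \<Longrightarrow> k \<notin> F \<Longrightarrow> f k \<in> carrier_mat n n \<Longrightarrow>
   msum n (insert k F) f = f k + msum n F f"
  unfolding msum_def by (rule eq_matI) auto

lemma pow_diff_eq:
  fixes X Y :: "complex mat"
  assumes X: "X \<in> carrier_mat n n" and Y: "Y \<in> carrier_mat n n"
  shows "X ^\<^sub>m Suc k - Y ^\<^sub>m Suc k = X ^\<^sub>m k * (X - Y) + (X ^\<^sub>m k - Y ^\<^sub>m k) * Y"
proof -
  have P: "X ^\<^sub>m k \<in> carrier_mat n n" "Y ^\<^sub>m k \<in> carrier_mat n n"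
    using X Y by (auto intro: pow_carrier_mat)
  have "X ^\<^sub>m k * (X - Y) + (X ^\<^sub>m k - Y ^\<^sub>m k) * Y
      = (X ^\<^sub>m k * X - X ^\<^sub>m k * Y) + (X ^\<^sub>m k * Y - Y ^\<^sub>m k * Y)"
    using mult_minus_distrib_mat[OF P(1) X Y] minus_mult_distrib_mat[OF P(1) P(2) Y] by simp
  also have "\<dots> = X ^\<^sub>m k * X - Y ^\<^sub>m k * Y"
    using X Y P by (intro eq_matI) auto
  finally show ?thesis by simp
qed

locale bdloc =
  fixes n :: nat and Bd :: "complex mat \<Rightarrow> real \<Rightarrow> bool"
  assumes bd_zero: "Bd (0\<^sub>m n n) 0"
  and bd_add: "\<And>X Y a b. X \<in> carrier_mat n n \<Longrightarrow> Y \<in> carrier_mat n n \<Longrightarrow> Bd X a \<Longrightarrow> Bd Y b \<Longrightarrow> Bd (X + Y) (a + b)"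
  and bd_mult: "\<And>X Y a b. X \<in> carrier_mat n n \<Longrightarrow> Y \<in> carrier_mat n n \<Longrightarrow> Bd X a \<Longrightarrow> Bd Y b \<Longrightarrow> Bd (X * Y) (a * b)"
  and bd_smult: "\<And>X a s. X \<in> carrier_mat n n \<Longrightarrow> Bd X a \<Longrightarrow> Bd (s \<cdot>\<^sub>m X) (cmod s * a)"
  and bd_mono: "\<And>X a b. Bd X a \<Longrightarrow> a \<le> b \<Longrightarrow> Bd X b"
  and bd_nonneg: "\<And>X a. Bd X a \<Longrightarrow> 0 \<le> a"
begin

lemma bd_msum:
  assumes "finite F" "\<And>k. k \<in> F \<Longrightarrow> f k \<in> carrier_mat n n \<and> Bd (f k) (c k)"
  shows "Bd (msum n F f) (\<Sum>k\<in>F. c k)"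
  using assms
proof (induction F rule: finite_induct)
  case empty
  then show ?case using bd_zero by (simp add: msum_empty)
next
  case (insert x F)
  then show ?case by (simp add: msum_insert bd_add)
qed

lemma bd_pow:
  assumes X: "X \<in> carrier_mat n n" and "Bd X a" and "k \<ge> 1"
  shows "Bd (X ^\<^sub>m k) (a ^ k)"
  using assms(3)
proof (induction k rule: dec_induct)
  case base
  then show ?case using assms by simp
next
  case (step k)
  then show ?case using bd_mult[OF pow_carrier_mat[OF X] X step(3) assms(2)] by (simp add: mult.commute)
qed

lemma bd_powdiff:
  assumes X: "X \<in> carrier_mat n n" and Y: "Y \<in> carrier_mat n n"
    and a: "Bd X a" "Bd Y a" and c: "Bd (X - Y) c" and "k \<ge> 1"
  shows "Bd (X ^\<^sub>m k - Y ^\<^sub>m k) (real k * a ^ (k - 1) * c)"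
  using assms(6)
proof (induction k rule: dec_induct)
  case base
  have "X ^\<^sub>m 1 - Y ^\<^sub>m 1 = X - Y" using X Y by simp
  then show ?case using c by simp
next
  case (step k)
  have P: "X ^\<^sub>m k \<in> carrier_mat n n" "Y ^\<^sub>m k \<in> carrier_mat n n" "X - Y \<in> carrier_mat n n"
     "X ^\<^sub>m k - Y ^\<^sub>m k \<in> carrier_mat n n"
    using X Y by (auto intro: pow_carrier_mat)
  have "Bd (X ^\<^sub>m k * (X - Y) + (X ^\<^sub>m k - Y ^\<^sub>m k) * Y)
          (a ^ k * c + real k * a ^ (k - 1) * c * a)"
  proof (rule bd_add)
    show "Bd (X ^\<^sub>m k * (X - Y)) (a ^ k * c)"
      by (rule bd_mult[OF P(1) P(3) bd_pow[OF X a(1) step(1)] c])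
    show "Bd ((X ^\<^sub>m k - Y ^\<^sub>m k) * Y) (real k * a ^ (k - 1) * c * a)"
      by (rule bd_mult[OF P(4) Y step(3) a(2)])
    show "X ^\<^sub>m k * (X - Y) \<in> carrier_mat n n" using P by auto
    show "(X ^\<^sub>m k - Y ^\<^sub>m k) * Y \<in> carrier_mat n n" using P Y by auto
  qed
  moreover have "a ^ k * c + real k * a ^ (k - 1) * c * a = real (Suc k) * a ^ (Suc k - 1) * c"
    using step(1) by (cases k) (auto simp: algebra_simps)
  ultimately show ?case using pow_diff_eq[OF X Y, of k] by simp
qed

lemma bd_polycomm:
  assumes A: "A \<in> carrier_mat n n" and B: "B \<in> carrier_mat n n"
    and a: "Bd A a" and b: "Bd B b" and c: "Bd (commutator A B) c"
  shows "Bd (poly_commutator p A B)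
     (c * (\<Sum>k=1..degree p. cmod (coeff p k) * real k * (a * b) ^ (k - 1)))"
proof -
  define X where "X = A * B"
  define Y where "Y = B * A"
  define d where "d = degree p"
  have X: "X \<in> carrier_mat n n" and Y: "Y \<in> carrier_mat n n"
    unfolding X_def Y_def using A B by auto
  have XY: "\<And>k. X ^\<^sub>m k - Y ^\<^sub>m k \<in> carrier_mat n n"
    using X Y by (auto intro: pow_carrier_mat)
  have eq: "poly_commutator p A B = msum n {..d} (\<lambda>k. coeff p k \<cdot>\<^sub>m (X ^\<^sub>m k - Y ^\<^sub>m k))"
  proof (rule eq_matI)
    fix i j assume ij: "i < dim_row (msum n {..d} (\<lambda>k. coeff p k \<cdot>\<^sub>m (X ^\<^sub>m k - Y ^\<^sub>m k)))"
       "j < dim_col (msum n {..d} (\<lambda>k. coeff p k \<cdot>\<^sub>m (X ^\<^sub>m k - Y ^\<^sub>m k)))"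
    then have i: "i < n" and j: "j < n" by (auto simp: msum_def)
    have "poly_commutator p A B $$ (i, j) = poly_mat p X $$ (i,j) - poly_mat p Y $$ (i,j)"
      unfolding poly_commutator_def X_def Y_def using A B i j by (simp add: poly_mat_def)
    also have "\<dots> = (\<Sum>k\<le>d. coeff p k * (X ^\<^sub>m k) $$ (i, j)) - (\<Sum>k\<le>d. coeff p k * (Y ^\<^sub>m k) $$ (i, j))"
      unfolding poly_mat_def d_def using X Y i j by simp
    also have "\<dots> = (\<Sum>k\<le>d. (coeff p k \<cdot>\<^sub>m (X ^\<^sub>m k - Y ^\<^sub>m k)) $$ (i, j))"
      using X Y i j by (simp add: sum_subtractf[symmetric] algebra_simps pow_mat_dim_square)
    also have "\<dots> = msum n {..d} (\<lambda>k. coeff p k \<cdot>\<^sub>m (X ^\<^sub>m k - Y ^\<^sub>m k)) $$ (i, j)"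
      unfolding msum_def using i j by simp
    finally show "poly_commutator p A B $$ (i, j) = msum n {..d} (\<lambda>k. coeff p k \<cdot>\<^sub>m (X ^\<^sub>m k - Y ^\<^sub>m k)) $$ (i, j)" .
  next
    show "dim_row (poly_commutator p A B) = dim_row (msum n {..d} (\<lambda>k. coeff p k \<cdot>\<^sub>m (X ^\<^sub>m k - Y ^\<^sub>m k)))"
      unfolding poly_commutator_def poly_mat_def using A B by simp
    show "dim_col (poly_commutator p A B) = dim_col (msum n {..d} (\<lambda>k. coeff p k \<cdot>\<^sub>m (X ^\<^sub>m k - Y ^\<^sub>m k)))"
      unfolding poly_commutator_def poly_mat_def using A B by simp
  qed
  have bX: "Bd X (a * b)" unfolding X_def using bd_mult[OF A B a b] .
  have bY: "Bd Y (a * b)" unfolding Y_def using bd_mult[OF B A b a] by (simp add: mult.commute)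
  have bC: "Bd (X - Y) c" using c unfolding X_def Y_def commutator_def .
  have trm: "Bd (X ^\<^sub>m k - Y ^\<^sub>m k) (real k * (a * b) ^ (k - 1) * c)" for k
  proof (cases "k = 0")
    case True
    have "X ^\<^sub>m k - Y ^\<^sub>m k = 0\<^sub>m n n" using True X Y by (intro eq_matI) auto
    then show ?thesis using True bd_zero by simp
  next
    case False
    then show ?thesis using bd_powdiff[OF X Y bX bY bC] by simp
  qed
  have "Bd (msum n {..d} (\<lambda>k. coeff p k \<cdot>\<^sub>m (X ^\<^sub>m k - Y ^\<^sub>m k)))
          (\<Sum>k\<le>d. cmod (coeff p k) * (real k * (a * b) ^ (k - 1) * c))"
    by (rule bd_msum) (use XY bd_smult[OF XY trm] smult_carrier_mat in blast)+
  moreover have "(\<Sum>k\<le>d. cmod (coeff p k) * (real k * (a * b) ^ (k - 1) * c))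
      = c * (\<Sum>k=1..d. cmod (coeff p k) * real k * (a * b) ^ (k - 1))"
  proof -
    have "{..d} = insert 0 {1..d}" by auto
    then have "(\<Sum>k\<le>d. cmod (coeff p k) * (real k * (a * b) ^ (k - 1) * c))
       = (\<Sum>k=1..d. cmod (coeff p k) * (real k * (a * b) ^ (k - 1) * c))" by simp
    also have "\<dots> = c * (\<Sum>k=1..d. cmod (coeff p k) * real k * (a * b) ^ (k - 1))"
      by (simp add: sum_distrib_left algebra_simps)
    finally show ?thesis .
  qed
  ultimately show ?thesis using eq d_def by simp
qed

end


lemma mult_cnj_sq: "z * cnj z = (complex_of_real (cmod z))\<^sup>2"
  by (metis complex_norm_square of_real_power)

lemma frob_eq_sum:
  assumes X: "X \<in> carrier_mat n n"
  shows "frob_norm X = sqrt (\<Sum>i<n. \<Sum>j<n. (cmod (X $$ (i,j)))\<^sup>2)"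
proof -
  have d: "(mat_adjoint X * X) $$ (j, j) = (\<Sum>i<n. of_real ((cmod (X $$ (i,j)))\<^sup>2))" if j: "j < n" for j
  proof -
    have "(mat_adjoint X * X) $$ (j, j) = conjugate (col X j) \<bullet> col X j"
      using X j unfolding mat_adjoint_def by simp
    also have "\<dots> = (\<Sum>i<n. of_real ((cmod (X $$ (i,j)))\<^sup>2))"
      using X j unfolding scalar_prod_def
      by (intro sum.cong) (auto simp: mult_cnj_sq mult.commute)
    finally show ?thesis .
  qed
  have dr: "dim_row (mat_adjoint X * X) = n" using X unfolding mat_adjoint_def by simp
  have "Re (mat_trace (mat_adjoint X * X)) = (\<Sum>j<n. \<Sum>i<n. (cmod (X $$ (i,j)))\<^sup>2)"
    unfolding mat_trace_def dr using d by (simp add: Re_sum)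
  also have "\<dots> = (\<Sum>i<n. \<Sum>j<n. (cmod (X $$ (i,j)))\<^sup>2)" by (rule sum.swap)
  finally show ?thesis unfolding frob_norm_def by simp
qed

lemma frob_eq_L2:
  assumes X: "X \<in> carrier_mat n n"
  shows "frob_norm X = L2_set (\<lambda>q. cmod (X $$ q)) ({..<n} \<times> {..<n})"
  unfolding frob_eq_sum[OF X] L2_set_def
  by (simp add: sum.cartesian_product case_prod_beta)

lemma frob_nonneg: "X \<in> carrier_mat n n \<Longrightarrow> 0 \<le> frob_norm X"
  by (simp add: frob_eq_sum sum_nonneg)

lemma frob_add:
  assumes X: "X \<in> carrier_mat n n" and Y: "Y \<in> carrier_mat n n"
  shows "frob_norm (X + Y) \<le> frob_norm X + frob_norm Y"
proof -
  have "frob_norm (X + Y) = L2_set (\<lambda>q. cmod ((X + Y) $$ q)) ({..<n} \<times> {..<n})"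
    using X Y by (intro frob_eq_L2) auto
  also have "\<dots> \<le> L2_set (\<lambda>q. cmod (X $$ q) + cmod (Y $$ q)) ({..<n} \<times> {..<n})"
    using X Y by (intro L2_set_mono) (auto simp: norm_triangle_ineq)
  also have "\<dots> \<le> frob_norm X + frob_norm Y"
    unfolding frob_eq_L2[OF X] frob_eq_L2[OF Y] by (rule L2_set_triangle_ineq)
  finally show ?thesis .
qed

lemma frob_smult:
  assumes X: "X \<in> carrier_mat n n"
  shows "frob_norm (s \<cdot>\<^sub>m X) = cmod s * frob_norm X"
proof -
  have "frob_norm (s \<cdot>\<^sub>m X) = L2_set (\<lambda>q. cmod ((s \<cdot>\<^sub>m X) $$ q)) ({..<n} \<times> {..<n})"
    using X by (intro frob_eq_L2) auto
  also have "\<dots> = L2_set (\<lambda>q. cmod s * cmod (X $$ q)) ({..<n} \<times> {..<n})"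
    using X by (intro L2_set_cong) (auto simp: norm_mult)
  also have "\<dots> = cmod s * frob_norm X"
    unfolding frob_eq_L2[OF X] by (simp add: L2_set_right_distrib)
  finally show ?thesis .
qed

lemma frob_mult:
  assumes X: "X \<in> carrier_mat n n" and Y: "Y \<in> carrier_mat n n"
  shows "frob_norm (X * Y) \<le> frob_norm X * frob_norm Y"
proof -
  define R where "R i = (\<Sum>k<n. (cmod (X $$ (i,k)))\<^sup>2)" for i
  define S where "S j = (\<Sum>k<n. (cmod (Y $$ (k,j)))\<^sup>2)" for j
  have ent: "(cmod ((X * Y) $$ (i,j)))\<^sup>2 \<le> R i * S j" if i: "i < n" and j: "j < n" for i j
  proof -
    have "(X * Y) $$ (i,j) = (\<Sum>k<n. X $$ (i,k) * Y $$ (k,j))"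
      using X Y i j by (simp add: scalar_prod_def lessThan_atLeast0)
    then have "cmod ((X * Y) $$ (i,j)) \<le> (\<Sum>k<n. \<bar>cmod (X $$ (i,k))\<bar> * \<bar>cmod (Y $$ (k,j))\<bar>)"
      by (auto intro: order.trans[OF norm_sum] simp: norm_mult)
    also have "\<dots> \<le> L2_set (\<lambda>k. cmod (X $$ (i,k))) {..<n} * L2_set (\<lambda>k. cmod (Y $$ (k,j))) {..<n}"
      by (rule L2_set_mult_ineq)
    also have "\<dots> = sqrt (R i * S j)"
      unfolding L2_set_def R_def S_def by (simp add: real_sqrt_mult)
    finally have "cmod ((X * Y) $$ (i,j)) \<le> sqrt (R i * S j)" .
    moreover have "0 \<le> R i * S j" unfolding R_def S_def by (intro mult_nonneg_nonneg sum_nonneg) auto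
    ultimately show ?thesis
      by (metis norm_ge_zero power_mono real_sqrt_pow2)
  qed
  have "(\<Sum>i<n. \<Sum>j<n. (cmod ((X * Y) $$ (i,j)))\<^sup>2) \<le> (\<Sum>i<n. \<Sum>j<n. R i * S j)"
    using ent by (intro sum_mono) auto
  also have "\<dots> = (\<Sum>i<n. R i) * (\<Sum>j<n. S j)"
    by (simp add: sum_product)
  also have "(\<Sum>j<n. S j) = (\<Sum>i<n. \<Sum>j<n. (cmod (Y $$ (i,j)))\<^sup>2)"
    unfolding S_def by (rule sum.swap)
  finally have "(\<Sum>i<n. \<Sum>j<n. (cmod ((X * Y) $$ (i,j)))\<^sup>2) \<le>
     (\<Sum>i<n. \<Sum>j<n. (cmod (X $$ (i,j)))\<^sup>2) * (\<Sum>i<n. \<Sum>j<n. (cmod (Y $$ (i,j)))\<^sup>2)"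
    unfolding R_def .
  then have "sqrt (\<Sum>i<n. \<Sum>j<n. (cmod ((X * Y) $$ (i,j)))\<^sup>2) \<le>
     sqrt (\<Sum>i<n. \<Sum>j<n. (cmod (X $$ (i,j)))\<^sup>2) * sqrt (\<Sum>i<n. \<Sum>j<n. (cmod (Y $$ (i,j)))\<^sup>2)"
    by (simp add: real_sqrt_mult[symmetric])
  moreover have "X * Y \<in> carrier_mat n n" using X Y by auto
  ultimately show ?thesis using frob_eq_sum X Y by metis
qed

interpretation frob: bdloc n "\<lambda>X c. frob_norm X \<le> c \<and> 0 \<le> c" for n
proof
  show "frob_norm (0\<^sub>m n n) \<le> 0 \<and> 0 \<le> (0::real)"
    using frob_eq_sum[of "0\<^sub>m n n" n] by simp
next
  fix X Y :: "complex mat" and a b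
  assume X: "X \<in> carrier_mat n n" and Y: "Y \<in> carrier_mat n n" and a: "frob_norm X \<le> a \<and> 0 \<le> a" and b: "frob_norm Y \<le> b \<and> 0 \<le> b"
  show "frob_norm (X + Y) \<le> a + b \<and> 0 \<le> a + b" using frob_add[OF X Y] a b by simp
  show "frob_norm (X * Y) \<le> a * b \<and> 0 \<le> a * b" using frob_mult[OF X Y] a b frob_nonneg[OF X] frob_nonneg[OF Y]
    by (meson mult_mono order_trans mult_nonneg_nonneg)
next
  fix X :: "complex mat" and a s
  assume X: "X \<in> carrier_mat n n" and a: "frob_norm X \<le> a \<and> 0 \<le> a"
  show "frob_norm (s \<cdot>\<^sub>m X) \<le> cmod s * a \<and> 0 \<le> cmod s * a" using frob_smult[OF X] a by (simp add: mult_left_mono)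
next
  fix X :: "complex mat" and a b :: real
  show "frob_norm X \<le> a \<and> 0 \<le> a \<Longrightarrow> a \<le> b \<Longrightarrow> frob_norm X \<le> b \<and> 0 \<le> b" by simp
  show "frob_norm X \<le> a \<and> 0 \<le> a \<Longrightarrow> 0 \<le> a" by simp
qed



lemma cnorm_L2: "cvec_norm v = L2_set (\<lambda>i. cmod (v $ i)) {..<dim_vec v}"
proof -
  have "v \<bullet>c v = (\<Sum>i<dim_vec v. complex_of_real ((cmod (v $ i))\<^sup>2))"
    unfolding scalar_prod_def by (intro sum.cong) (auto simp: mult_cnj_sq)
  then show ?thesis unfolding cvec_norm_def L2_set_def by (simp add: Re_sum)
qed

lemma cnorm_sq: "(cvec_norm v)\<^sup>2 = (\<Sum>i<dim_vec v. (cmod (v $ i))\<^sup>2)"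
  unfolding cnorm_L2 L2_set_def by (simp add: sum_nonneg)

lemma cnorm_nonneg: "0 \<le> cvec_norm v"
  unfolding cnorm_L2 by simp

lemma cnorm_add:
  assumes "u \<in> carrier_vec n" "w \<in> carrier_vec n"
  shows "cvec_norm (u + w) \<le> cvec_norm u + cvec_norm w"
proof -
  have "cvec_norm (u + w) = L2_set (\<lambda>i. cmod ((u + w) $ i)) {..<n}"
    using assms by (simp add: cnorm_L2)
  also have "\<dots> \<le> L2_set (\<lambda>i. cmod (u $ i) + cmod (w $ i)) {..<n}"
    using assms by (intro L2_set_mono) (auto simp: norm_triangle_ineq)
  also have "\<dots> \<le> cvec_norm u + cvec_norm w"
    using assms unfolding cnorm_L2 by (simp add: L2_set_triangle_ineq)
  finally show ?thesis .
qed

lemma cnorm_smult: "cvec_norm (s \<cdot>\<^sub>v w) = cmod s * cvec_norm w"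
proof -
  have "cvec_norm (s \<cdot>\<^sub>v w) = L2_set (\<lambda>i. cmod s * cmod (w $ i)) {..<dim_vec w}"
    unfolding cnorm_L2 by (intro L2_set_cong) (auto simp: norm_mult)
  then show ?thesis unfolding cnorm_L2 by (simp add: L2_set_right_distrib)
qed

lemma cnorm_zero:
  assumes "v \<in> carrier_vec n" "cvec_norm v = 0"
  shows "v = 0\<^sub>v n"
proof -
  have "\<forall>i\<in>{..<n}. cmod (v $ i) = 0"
    using assms unfolding cnorm_L2 by (subst (asm) L2_set_eq_0_iff) auto
  then show ?thesis using assms by (intro eq_vecI) auto
qed

lemma cs_ineq:
  assumes u: "u \<in> carrier_vec n" and w: "w \<in> carrier_vec n"
  shows "cmod (conjugate u \<bullet> w) \<le> cvec_norm u * cvec_norm w"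
proof -
  have "conjugate u \<bullet> w = (\<Sum>i<n. cnj (u $ i) * w $ i)"
    using u w unfolding scalar_prod_def by (intro sum.cong) auto
  then have "cmod (conjugate u \<bullet> w) \<le> (\<Sum>i<n. \<bar>cmod (u $ i)\<bar> * \<bar>cmod (w $ i)\<bar>)"
    by (auto intro: order.trans[OF norm_sum] simp: norm_mult)
  also have "\<dots> \<le> L2_set (\<lambda>i. cmod (u $ i)) {..<n} * L2_set (\<lambda>i. cmod (w $ i)) {..<n}"
    by (rule L2_set_mult_ineq)
  finally show ?thesis using u w by (simp add: cnorm_L2)
qed

lemma self_sp:
  assumes w: "w \<in> carrier_vec n"
  shows "conjugate w \<bullet> w = complex_of_real ((cvec_norm w)\<^sup>2)"
proof -
  have "conjugate w \<bullet> w = (\<Sum>i<n. complex_of_real ((cmod (w $ i))\<^sup>2))"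
    using w unfolding scalar_prod_def by (intro sum.cong) (auto simp: mult_cnj_sq mult.commute)
  then show ?thesis using w by (simp add: cnorm_sq)
qed

lemma mv_bound:
  assumes X: "X \<in> carrier_mat n n" and v: "v \<in> carrier_vec n"
  shows "cvec_norm (X *\<^sub>v v) \<le> frob_norm X * cvec_norm v"
proof -
  define R where "R i = (\<Sum>k<n. (cmod (X $$ (i,k)))\<^sup>2)" for i
  have ent: "(cmod ((X *\<^sub>v v) $ i))\<^sup>2 \<le> R i * (cvec_norm v)\<^sup>2" if i: "i < n" for i
  proof -
    have "(X *\<^sub>v v) $ i = (\<Sum>k<n. X $$ (i,k) * v $ k)"
      using X v i by (simp add: scalar_prod_def lessThan_atLeast0)
    then have "cmod ((X *\<^sub>v v) $ i) \<le> (\<Sum>k<n. \<bar>cmod (X $$ (i,k))\<bar> * \<bar>cmod (v $ k)\<bar>)"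
      by (auto intro: order.trans[OF norm_sum] simp: norm_mult)
    also have "\<dots> \<le> L2_set (\<lambda>k. cmod (X $$ (i,k))) {..<n} * L2_set (\<lambda>k. cmod (v $ k)) {..<n}"
      by (rule L2_set_mult_ineq)
    also have "\<dots> = sqrt (R i * (cvec_norm v)\<^sup>2)"
      using v unfolding L2_set_def R_def cnorm_sq by (simp add: real_sqrt_mult)
    finally have "cmod ((X *\<^sub>v v) $ i) \<le> sqrt (R i * (cvec_norm v)\<^sup>2)" .
    moreover have "0 \<le> R i * (cvec_norm v)\<^sup>2" unfolding R_def by (intro mult_nonneg_nonneg sum_nonneg) auto
    ultimately show ?thesis
      by (metis norm_ge_zero power_mono real_sqrt_pow2)
  qed
  have "(cvec_norm (X *\<^sub>v v))\<^sup>2 = (\<Sum>i<n. (cmod ((X *\<^sub>v v) $ i))\<^sup>2)"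
    using X by (simp add: cnorm_sq)
  also have "\<dots> \<le> (\<Sum>i<n. R i * (cvec_norm v)\<^sup>2)"
    using ent by (intro sum_mono) auto
  also have "\<dots> = (frob_norm X * cvec_norm v)\<^sup>2"
    unfolding R_def frob_eq_sum[OF X] by (simp add: sum_distrib_right power_mult_distrib sum_nonneg)
  finally show ?thesis
    using frob_nonneg[OF X] cnorm_nonneg[of v] by (meson mult_nonneg_nonneg power2_le_imp_le)
qed



definition BdO :: "nat \<Rightarrow> complex mat \<Rightarrow> real \<Rightarrow> bool" where
  "BdO n X c \<longleftrightarrow> 0 \<le> c \<and> (\<forall>v\<in>carrier_vec n. cvec_norm (X *\<^sub>v v) \<le> c * cvec_norm v)"

lemma smult_mat_vec:
  assumes X: "X \<in> carrier_mat n n" and v: "v \<in> carrier_vec n"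
  shows "(s \<cdot>\<^sub>m X) *\<^sub>v v = s \<cdot>\<^sub>v (X *\<^sub>v v)"
  using X v by (intro eq_vecI) (auto simp: scalar_prod_def sum_distrib_left algebra_simps)

interpretation opb: bdloc n "BdO n" for n
proof
  show "BdO n (0\<^sub>m n n) 0"
    unfolding BdO_def
  proof (intro conjI ballI)
    fix v :: "complex vec" assume v: "v \<in> carrier_vec n"
    have f0: "frob_norm (0\<^sub>m n n) = 0" by (subst frob_eq_sum[of _ n]) auto
    have "cvec_norm (0\<^sub>m n n *\<^sub>v v) \<le> frob_norm (0\<^sub>m n n) * cvec_norm v"
      by (rule mv_bound) (use v in auto)
    then show "cvec_norm (0\<^sub>m n n *\<^sub>v v) \<le> 0 * cvec_norm v" using f0 by simp
  qed simp
next
  fix X Y :: "complex mat" and a b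
  assume X: "X \<in> carrier_mat n n" and Y: "Y \<in> carrier_mat n n" and a: "BdO n X a" and b: "BdO n Y b"
  show "BdO n (X + Y) (a + b)"
    unfolding BdO_def
  proof (intro conjI ballI)
    show "0 \<le> a + b" using a b unfolding BdO_def by simp
    fix v :: "complex vec" assume v: "v \<in> carrier_vec n"
    have "cvec_norm ((X + Y) *\<^sub>v v) = cvec_norm (X *\<^sub>v v + Y *\<^sub>v v)"
      using X Y v by (simp add: add_mult_distrib_mat_vec)
    also have "\<dots> \<le> cvec_norm (X *\<^sub>v v) + cvec_norm (Y *\<^sub>v v)"
      using X Y v by (intro cnorm_add[of _ n]) auto
    also have "\<dots> \<le> a * cvec_norm v + b * cvec_norm v"
      using a b v unfolding BdO_def by (intro add_mono) auto
    finally show "cvec_norm ((X + Y) *\<^sub>v v) \<le> (a + b) * cvec_norm v" by (simp add: algebra_simps)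
  qed
  show "BdO n (X * Y) (a * b)"
    unfolding BdO_def
  proof (intro conjI ballI)
    show "0 \<le> a * b" using a b unfolding BdO_def by simp
    fix v :: "complex vec" assume v: "v \<in> carrier_vec n"
    have Yv: "Y *\<^sub>v v \<in> carrier_vec n" using Y v by auto
    have "cvec_norm ((X * Y) *\<^sub>v v) = cvec_norm (X *\<^sub>v (Y *\<^sub>v v))"
      using X Y v by (simp add: assoc_mult_mat_vec)
    also have "\<dots> \<le> a * cvec_norm (Y *\<^sub>v v)"
      using a Yv unfolding BdO_def by auto
    also have "\<dots> \<le> a * (b * cvec_norm v)"
      using a b v unfolding BdO_def by (intro mult_left_mono) auto
    finally show "cvec_norm ((X * Y) *\<^sub>v v) \<le> (a * b) * cvec_norm v" by (simp add: algebra_simps)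
  qed
next
  fix X :: "complex mat" and a s
  assume X: "X \<in> carrier_mat n n" and a: "BdO n X a"
  show "BdO n (s \<cdot>\<^sub>m X) (cmod s * a)"
    unfolding BdO_def
  proof (intro conjI ballI)
    show "0 \<le> cmod s * a" using a unfolding BdO_def by simp
    fix v :: "complex vec" assume v: "v \<in> carrier_vec n"
    have "cvec_norm ((s \<cdot>\<^sub>m X) *\<^sub>v v) = cmod s * cvec_norm (X *\<^sub>v v)"
      using X v by (simp add: smult_mat_vec cnorm_smult)
    also have "\<dots> \<le> cmod s * (a * cvec_norm v)"
      using a v unfolding BdO_def by (intro mult_left_mono) auto
    finally show "cvec_norm ((s \<cdot>\<^sub>m X) *\<^sub>v v) \<le> (cmod s * a) * cvec_norm v" by (simp add: algebra_simps)
  qed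
next
  fix X :: "complex mat" and a b :: real
  show "BdO n X a \<Longrightarrow> a \<le> b \<Longrightarrow> BdO n X b"
    unfolding BdO_def by (meson cnorm_nonneg mult_right_mono order_trans)
  show "BdO n X a \<Longrightarrow> 0 \<le> a" unfolding BdO_def by simp
qed



lemma unit_norm: "0 < n \<Longrightarrow> cvec_norm (unit_vec n 0) = 1"
proof -
  assume n: "0 < n"
  have "(cvec_norm (unit_vec n 0))\<^sup>2 = (\<Sum>i<n. (if i = 0 then 1 else 0))"
    unfolding cnorm_sq by (intro sum.cong) (auto simp: unit_vec_def)
  also have "\<dots> = 1" using n by simp
  finally show ?thesis using cnorm_nonneg[of "unit_vec n 0"]
    by (metis abs_of_nonneg real_sqrt_abs real_sqrt_one)
qed

locale nrloc =
  fixes n :: nat and X :: "complex mat"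
  assumes n: "1 \<le> n" and X: "X \<in> carrier_mat n n"
begin

definition "S = {cmod (conjugate v \<bullet> (X *\<^sub>v v)) | v. v \<in> carrier_vec n \<and> cvec_norm v = 1}"

lemma nr_S: "num_radius X = Sup S"
  unfolding num_radius_def S_def using X by simp

lemma q_bound: "v \<in> carrier_vec n \<Longrightarrow> cmod (conjugate v \<bullet> (X *\<^sub>v v)) \<le> frob_norm X * (cvec_norm v)\<^sup>2"
proof -
  assume v: "v \<in> carrier_vec n"
  have "cmod (conjugate v \<bullet> (X *\<^sub>v v)) \<le> cvec_norm v * cvec_norm (X *\<^sub>v v)"
    using v X by (intro cs_ineq[of _ n]) auto
  also have "\<dots> \<le> cvec_norm v * (frob_norm X * cvec_norm v)"
    using mv_bound[OF X v] by (intro mult_left_mono cnorm_nonneg) auto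
  finally show ?thesis by (simp add: power2_eq_square algebra_simps)
qed

lemma S_ne: "S \<noteq> {}"
  unfolding S_def using unit_norm[of n] n by (auto intro!: exI[of _ "unit_vec n 0"])

lemma S_bdd: "bdd_above S"
  unfolding S_def bdd_above_def using q_bound by (intro exI[of _ "frob_norm X"]) fastforce

lemma nr_upper: "v \<in> carrier_vec n \<Longrightarrow> cvec_norm v = 1 \<Longrightarrow> cmod (conjugate v \<bullet> (X *\<^sub>v v)) \<le> num_radius X"
  unfolding nr_S by (rule cSup_upper[OF _ S_bdd]) (auto simp: S_def)

lemma nr_least: "(\<And>v. v \<in> carrier_vec n \<Longrightarrow> cvec_norm v = 1 \<Longrightarrow> cmod (conjugate v \<bullet> (X *\<^sub>v v)) \<le> c) \<Longrightarrow> num_radius X \<le> c"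
  unfolding nr_S by (rule cSup_least[OF S_ne]) (auto simp: S_def)

lemma nr_nonneg: "0 \<le> num_radius X"
proof -
  have "cvec_norm (unit_vec n 0) = 1" using unit_norm[of n] n by simp
  then have "cmod (conjugate (unit_vec n 0) \<bullet> (X *\<^sub>v unit_vec n 0)) \<le> num_radius X"
    using nr_upper[of "unit_vec n 0"] by simp
  then show ?thesis using norm_ge_zero order_trans by blast
qed

lemma nr_quad:
  assumes w: "w \<in> carrier_vec n"
  shows "cmod (conjugate w \<bullet> (X *\<^sub>v w)) \<le> num_radius X * (cvec_norm w)\<^sup>2"
proof (cases "cvec_norm w = 0")
  case True
  then have "w = 0\<^sub>v n" using cnorm_zero w by blast
  then show ?thesis using X True by (simp add: scalar_prod_def)
next
  case False
  define r where "r = cvec_norm w"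
  have r: "0 < r" using False cnorm_nonneg[of w] unfolding r_def by linarith
  define v where "v = complex_of_real (1 / r) \<cdot>\<^sub>v w"
  have v: "v \<in> carrier_vec n" using w unfolding v_def by simp
  have nv: "cvec_norm v = 1" unfolding v_def cnorm_smult r_def[symmetric] using r by (simp add: norm_divide)
  have "conjugate v \<bullet> (X *\<^sub>v v) = complex_of_real (1 / r) * complex_of_real (1 / r) * (conjugate w \<bullet> (X *\<^sub>v w))"
    unfolding v_def using X w
    by (simp add: conjugate_smult_vec mult_mat_vec smult_scalar_prod_distrib[of _ n] scalar_prod_smult_distrib[of _ n])
  then have "cmod (conjugate v \<bullet> (X *\<^sub>v v)) = cmod (conjugate w \<bullet> (X *\<^sub>v w)) / r\<^sup>2"
    using r by (simp add: norm_mult norm_divide power2_eq_square of_real_mult[symmetric] del: of_real_mult)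
  then have "cmod (conjugate w \<bullet> (X *\<^sub>v w)) / r\<^sup>2 \<le> num_radius X"
    using nr_upper[OF v nv] by simp
  then show ?thesis using r unfolding r_def[symmetric] by (simp add: field_simps)
qed

end


lemma pol_alg: fixes q s t p :: complex shows
 "4*s = (q + 1*s + cnj 1 * t + cnj 1 * 1 * p) - (q + (-1)*s + cnj(-1)*t + cnj(-1)*(-1)*p)
   - \<i>*(q + \<i>*s + cnj \<i> * t + cnj \<i> * \<i> * p) + \<i> * (q + (-\<i>)*s + cnj(-\<i>)*t + cnj(-\<i>)*(-\<i>)*p)"
  by (simp add: algebra_simps)
lemma tri4: fixes a b c d :: complex shows
  "cmod (a - b - \<i> * c + \<i> * d) \<le> cmod a + cmod b + cmod c + cmod d"
proof -
  have "cmod (a - b - \<i> * c + \<i> * d) \<le> cmod (a - b - \<i> * c) + cmod (\<i> * d)" by (rule norm_triangle_ineq)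
  also have "cmod (a - b - \<i> * c) \<le> cmod (a - b) + cmod (\<i> * c)" by (rule norm_triangle_ineq4)
  also have "cmod (a - b) \<le> cmod a + cmod b" by (rule norm_triangle_ineq4)
  finally show ?thesis by (simp add: norm_mult)
qed
lemma cmod_polar4: "(cmod (a + b))\<^sup>2 + (cmod (a + - 1 * b))\<^sup>2 + (cmod (a + \<i> * b))\<^sup>2 + (cmod (a + - \<i> * b))\<^sup>2
   = 4 * ((cmod a)\<^sup>2 + (cmod b)\<^sup>2)"
  unfolding cmod_power2 by (simp add: power2_eq_square algebra_simps)

context nrloc begin

lemma expand:
  assumes u: "u \<in> carrier_vec n" and v: "v \<in> carrier_vec n"
  shows "conjugate (u + c \<cdot>\<^sub>v v) \<bullet> (X *\<^sub>v (u + c \<cdot>\<^sub>v v))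
     = conjugate u \<bullet> (X *\<^sub>v u) + c * (conjugate u \<bullet> (X *\<^sub>v v)) + cnj c * (conjugate v \<bullet> (X *\<^sub>v u))
       + cnj c * c * (conjugate v \<bullet> (X *\<^sub>v v))"
proof -
  have c1: "conjugate u \<in> carrier_vec n" "conjugate v \<in> carrier_vec n" "X *\<^sub>v u \<in> carrier_vec n" "X *\<^sub>v v \<in> carrier_vec n"
    using u v X by auto
  have e1: "conjugate (u + c \<cdot>\<^sub>v v) = conjugate u + cnj c \<cdot>\<^sub>v conjugate v"
    using u v by (simp add: conjugate_add_vec[of _ n] conjugate_smult_vec)
  have e2: "X *\<^sub>v (u + c \<cdot>\<^sub>v v) = X *\<^sub>v u + c \<cdot>\<^sub>v (X *\<^sub>v v)"
    using u v X by (simp add: mult_add_distrib_mat_vec[of _ n n] mult_mat_vec[of _ n n])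
  show ?thesis unfolding e1 e2 using c1
    by (simp add: add_scalar_prod_distrib[of _ n] scalar_prod_add_distrib[of _ n]
        smult_scalar_prod_distrib[of _ n] scalar_prod_smult_distrib[of _ n] algebra_simps)
qed

lemma nsq_c:
  assumes u: "u \<in> carrier_vec n" and v: "v \<in> carrier_vec n"
  shows "(cvec_norm (u + c \<cdot>\<^sub>v v))\<^sup>2 = (\<Sum>i<n. (cmod (u $ i + c * v $ i))\<^sup>2)"
  using u v by (simp add: cnorm_sq)

lemma polar:
  assumes u: "u \<in> carrier_vec n" and v: "v \<in> carrier_vec n"
  shows "cmod (conjugate u \<bullet> (X *\<^sub>v v)) \<le> num_radius X * ((cvec_norm u)\<^sup>2 + (cvec_norm v)\<^sup>2)"
proof -
  define Q where "Q c = conjugate (u + c \<cdot>\<^sub>v v) \<bullet> (X *\<^sub>v (u + c \<cdot>\<^sub>v v))" for c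
  define N where "N c = (cvec_norm (u + c \<cdot>\<^sub>v v))\<^sup>2" for c
  have wc: "u + c \<cdot>\<^sub>v v \<in> carrier_vec n" for c using u v by auto
  have QN: "cmod (Q c) \<le> num_radius X * N c" for c
    unfolding Q_def N_def by (rule nr_quad[OF wc])
  have id: "4 * (conjugate u \<bullet> (X *\<^sub>v v)) = Q 1 - Q (-1) - \<i> * Q \<i> + \<i> * Q (- \<i>)"
    unfolding Q_def expand[OF u v] by (rule pol_alg)
  have Nsum: "N 1 + N (-1) + N \<i> + N (- \<i>) = 4 * ((cvec_norm u)\<^sup>2 + (cvec_norm v)\<^sup>2)"
  proof -
    have "N 1 + N (-1) + N \<i> + N (- \<i>) = (\<Sum>i<n. (cmod (u $ i + v $ i))\<^sup>2 + (cmod (u $ i + - 1 * v $ i))\<^sup>2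
          + (cmod (u $ i + \<i> * v $ i))\<^sup>2 + (cmod (u $ i + - \<i> * v $ i))\<^sup>2)"
      unfolding N_def nsq_c[OF u v] by (simp add: sum.distrib)
    also have "\<dots> = (\<Sum>i<n. 4 * ((cmod (u $ i))\<^sup>2 + (cmod (v $ i))\<^sup>2))"
      by (intro sum.cong refl cmod_polar4)
    also have "\<dots> = 4 * ((cvec_norm u)\<^sup>2 + (cvec_norm v)\<^sup>2)"
      using u v by (simp add: cnorm_sq sum_distrib_left sum.distrib)
    finally show ?thesis .
  qed
  have "4 * cmod (conjugate u \<bullet> (X *\<^sub>v v)) = cmod (Q 1 - Q (-1) - \<i> * Q \<i> + \<i> * Q (- \<i>))"
    using arg_cong[OF id, of cmod] by (simp add: norm_mult)
  also have "\<dots> \<le> cmod (Q 1) + cmod (Q (-1)) + cmod (Q \<i>) + cmod (Q (- \<i>))"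
    by (rule tri4)
  also have "\<dots> \<le> num_radius X * N 1 + num_radius X * N (-1) + num_radius X * N \<i> + num_radius X * N (- \<i>)"
    using QN by (intro add_mono) auto
  also have "\<dots> = num_radius X * (4 * ((cvec_norm u)\<^sup>2 + (cvec_norm v)\<^sup>2))"
    unfolding Nsum[symmetric] by (simp add: algebra_simps)
  finally have "4 * cmod (conjugate u \<bullet> (X *\<^sub>v v)) \<le> 4 * (num_radius X * ((cvec_norm u)\<^sup>2 + (cvec_norm v)\<^sup>2))"
    by (simp add: algebra_simps)
  then show ?thesis by linarith
qed

lemma op_bound:
  assumes v: "v \<in> carrier_vec n"
  shows "cvec_norm (X *\<^sub>v v) \<le> 2 * num_radius X * cvec_norm v"
proof -
  define a where "a = cvec_norm (X *\<^sub>v v)"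
  define b where "b = cvec_norm v"
  have h0: "0 \<le> num_radius X" by (rule nr_nonneg)
  have b0: "0 \<le> b" unfolding b_def by (rule cnorm_nonneg)
  show ?thesis
  proof (cases "a = 0")
    case True
    then show ?thesis using h0 b0 unfolding a_def b_def by simp
  next
    case False
    then have a: "0 < a" using cnorm_nonneg[of "X *\<^sub>v v"] unfolding a_def by linarith
    have "a \<le> frob_norm X * b" unfolding a_def b_def by (rule mv_bound[OF X v])
    then have b: "0 < b" using a b0 by (cases "b = 0") auto
    define t where "t = b / a"
    define u where "u = complex_of_real t \<cdot>\<^sub>v (X *\<^sub>v v)"
    have Xv: "X *\<^sub>v v \<in> carrier_vec n" using X v by simp
    have u: "u \<in> carrier_vec n" unfolding u_def using Xv by simp
    have nu: "cvec_norm u = b" unfolding u_def cnorm_smult a_def[symmetric] t_def using a b by (simp add: norm_divide)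
    have "conjugate u \<bullet> (X *\<^sub>v v) = complex_of_real t * (conjugate (X *\<^sub>v v) \<bullet> (X *\<^sub>v v))"
      unfolding u_def using Xv by (simp add: conjugate_smult_vec smult_scalar_prod_distrib[of _ n])
    also have "\<dots> = complex_of_real (t * a\<^sup>2)"
      unfolding self_sp[OF Xv] a_def by simp
    also have "t * a\<^sup>2 = b * a" unfolding t_def using a by (simp add: power2_eq_square)
    finally have "cmod (conjugate u \<bullet> (X *\<^sub>v v)) = b * a"
      using a b by (simp add: norm_mult)
    then have "b * a \<le> num_radius X * (b\<^sup>2 + b\<^sup>2)"
      using polar[OF u v] nu unfolding b_def by simp
    then have "b * a \<le> b * (2 * num_radius X * b)" by (simp add: power2_eq_square algebra_simps)
    then have "a \<le> 2 * num_radius X * b" using b by simp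
    then show ?thesis unfolding a_def b_def .
  qed
qed

lemma bdo_nr: "BdO n X (2 * num_radius X)"
  unfolding BdO_def using op_bound nr_nonneg by simp

lemma nr_le: "BdO n X c \<Longrightarrow> num_radius X \<le> c"
proof -
  assume B: "BdO n X c"
  show ?thesis
  proof (rule nr_least)
    fix v assume v: "v \<in> carrier_vec n" and nv: "cvec_norm v = 1"
    have "cmod (conjugate v \<bullet> (X *\<^sub>v v)) \<le> cvec_norm v * cvec_norm (X *\<^sub>v v)"
      using v X by (intro cs_ineq[of _ n]) auto
    also have "\<dots> \<le> c" using B v nv unfolding BdO_def by auto
    finally show "cmod (conjugate v \<bullet> (X *\<^sub>v v)) \<le> c" .
  qed
qed

end

lemma pw: fixes x y :: real assumes "1 \<le> k"
  shows "2 * (2 * x * (2 * y)) ^ (k - 1) = 2 ^ (2 * k - 1) * x ^ (k - 1) * y ^ (k - 1)"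
proof -
  obtain m where k: "k = Suc m" using assms by (cases k) auto
  have e: "2 * k - 1 = Suc (2 * m)" unfolding k by simp
  have "(2::real) ^ (2 * k - 1) = 2 * 4 ^ m" unfolding e power_Suc power_mult by simp
  moreover have "(2 * x * (2 * y)) ^ m = 4 ^ m * x ^ m * y ^ m"
  proof -
    have "2 * x * (2 * y) = 4 * (x * y)" by simp
    then show ?thesis by (simp only: power_mult_distrib mult.assoc)
  qed
  ultimately show ?thesis unfolding k by simp
qed

lemma poly_comm_carrier:
  assumes "A \<in> carrier_mat n n" "B \<in> carrier_mat n n"
  shows "poly_commutator p A B \<in> carrier_mat n n"
  using assms unfolding poly_commutator_def poly_mat_def by auto

theorem theorem5p1:
  fixes n :: nat and A B :: "complex mat" and p :: "complex poly"
  assumes "n \<ge> 1"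
    and "A \<in> carrier_mat n n" and "B \<in> carrier_mat n n"
    and "degree p \<ge> 1"
  shows "frob_norm (poly_commutator p A B)
           \<le> frob_norm (commutator A B) *
             (\<Sum>k=1..degree p. cmod (coeff p k) * real k *
                 frob_norm A ^ (k - 1) * frob_norm B ^ (k - 1)) \<and>
         num_radius (poly_commutator p A B)
           \<le> num_radius (commutator A B) *
             (\<Sum>k=1..degree p. cmod (coeff p k) * real k * 2 ^ (2 * k - 1) *
                 num_radius A ^ (k - 1) * num_radius B ^ (k - 1))"
proof
  have A: "A \<in> carrier_mat n n" and B: "B \<in> carrier_mat n n" using assms by auto
  have C: "commutator A B \<in> carrier_mat n n" using A B unfolding commutator_def by auto
  have P: "poly_commutator p A B \<in> carrier_mat n n" by (rule poly_comm_carrier[OF A B])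
  have "frob_norm (poly_commutator p A B) \<le> frob_norm (commutator A B) *
      (\<Sum>k=1..degree p. cmod (coeff p k) * real k * (frob_norm A * frob_norm B) ^ (k - 1))"
    using frob.bd_polycomm[OF A B, of "frob_norm A" "frob_norm B" "frob_norm (commutator A B)" p]
      frob_nonneg[OF A] frob_nonneg[OF B] frob_nonneg[OF C] by simp
  also have "(\<Sum>k=1..degree p. cmod (coeff p k) * real k * (frob_norm A * frob_norm B) ^ (k - 1))
     = (\<Sum>k=1..degree p. cmod (coeff p k) * real k * frob_norm A ^ (k - 1) * frob_norm B ^ (k - 1))"
    by (simp add: power_mult_distrib mult.assoc)
  finally show "frob_norm (poly_commutator p A B)
           \<le> frob_norm (commutator A B) *
             (\<Sum>k=1..degree p. cmod (coeff p k) * real k *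
                 frob_norm A ^ (k - 1) * frob_norm B ^ (k - 1))" .
next
  have n: "1 \<le> n" and A: "A \<in> carrier_mat n n" and B: "B \<in> carrier_mat n n" using assms by auto
  have C: "commutator A B \<in> carrier_mat n n" using A B unfolding commutator_def by auto
  have P: "poly_commutator p A B \<in> carrier_mat n n" by (rule poly_comm_carrier[OF A B])
  interpret nA: nrloc n A using n A by unfold_locales
  interpret nB: nrloc n B using n B by unfold_locales
  interpret nC: nrloc n "commutator A B" using n C by unfold_locales
  interpret nP: nrloc n "poly_commutator p A B" using n P by unfold_locales
  have "BdO n (poly_commutator p A B) (2 * num_radius (commutator A B) *
      (\<Sum>k=1..degree p. cmod (coeff p k) * real k * (2 * num_radius A * (2 * num_radius B)) ^ (k - 1)))"
    by (rule opb.bd_polycomm[OF A B nA.bdo_nr nB.bdo_nr nC.bdo_nr])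
  then have "num_radius (poly_commutator p A B) \<le> 2 * num_radius (commutator A B) *
      (\<Sum>k=1..degree p. cmod (coeff p k) * real k * (2 * num_radius A * (2 * num_radius B)) ^ (k - 1))"
    by (rule nP.nr_le)
  also have "\<dots> = num_radius (commutator A B) *
      (\<Sum>k=1..degree p. cmod (coeff p k) * real k * (2 * (2 * num_radius A * (2 * num_radius B)) ^ (k - 1)))"
    by (simp add: sum_distrib_left algebra_simps)
  also have "(\<Sum>k=1..degree p. cmod (coeff p k) * real k * (2 * (2 * num_radius A * (2 * num_radius B)) ^ (k - 1)))
     = (\<Sum>k=1..degree p. cmod (coeff p k) * real k * 2 ^ (2 * k - 1) *
                 num_radius A ^ (k - 1) * num_radius B ^ (k - 1))"
  proof (rule sum.cong[OF refl])
    fix k assume "k \<in> {1..degree p}"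
    then have k: "1 \<le> k" by simp
    show "cmod (coeff p k) * real k * (2 * (2 * num_radius A * (2 * num_radius B)) ^ (k - 1))
       = cmod (coeff p k) * real k * 2 ^ (2 * k - 1) * num_radius A ^ (k - 1) * num_radius B ^ (k - 1)"
      using pw[OF k, of "num_radius A" "num_radius B"] by (simp add: mult.assoc)
  qed
  finally show "num_radius (poly_commutator p A B)
           \<le> num_radius (commutator A B) *
             (\<Sum>k=1..degree p. cmod (coeff p k) * real k * 2 ^ (2 * k - 1) *
                 num_radius A ^ (k - 1) * num_radius B ^ (k - 1))" .
qed

end
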